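(* Let $A$ be an $m\times m$ coloring matrix, let $m'\ge1$, and let $A'$ be the $(m+m')\times(m+m')$ block matrix $$A'=\left[\begin{array}{c|c}A&0\\\hline \mathbf{1}&0\end{array}\right],$$ where $\mathbf{1}$ is the $m'\times m$ all-ones matrix and the $0$ blocks are zero matrices. Then $$F_{A'}(x)=F_A(x)+\frac{m'x}{1-F_A(x)}.$$
   Context: A plane tree is an unlabeled rooted tree in which the children of every vertex are linearly ordered. A coloring matrix is a square matrix $A=(a_{ij})$ with entries in $\{0,1\}$. An $A$-coloring of a plane tree assigns to each vertex a color (an index of a row of $A$) such that whenever a vertex of color $j$ is a child of a vertex of color $i$, $a_{ij}=1$. Let $t_A(n)$ be the number of pairs (plane tree with $n$ vertices, $A$-coloring of it), and $F_A(x)=\sum_{n\ge1}t_A(n)x^n$ (formal power series). *)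

theory Defs
  imports "HOL-Computational_Algebra.Formal_Power_Series"
begin

datatype ptree = Node "ptree list"

fun tsize :: "ptree \<Rightarrow> nat" where
  "tsize (Node ts) = Suc (sum_list (map tsize ts))"

text \<open>Vertices of a plane tree, addressed by their path from the root
  (list of child indices).\<close>
function vertices :: "ptree \<Rightarrow> nat list set" where
  "vertices (Node ts) = insert [] (\<Union>i<length ts. (\<lambda>p. i # p) ` vertices (ts ! i))"
  by pat_completeness auto
termination
  by (relation "measure size") (auto intro: size_list_estimation' nth_mem less_SucI simp: less_Suc_eq_le)

text \<open>A coloring matrix is given by its entries A i j \<in> {0,1} for
  i, j < m; colors are 0..<m.\<close>
definition is_coloring :: "(nat \<Rightarrow> nat \<Rightarrow> nat) \<Rightarrow> nat \<Rightarrow> ptree \<Rightarrow> (nat list \<Rightarrow> nat) \<Rightarrow> bool" where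
  "is_coloring A m T c \<longleftrightarrow>
     (\<forall>p\<in>vertices T. c p < m) \<and>
     (\<forall>p i. p \<in> vertices T \<longrightarrow> p @ [i] \<in> vertices T \<longrightarrow> A (c p) (c (p @ [i])) = 1) \<and>
     (\<forall>p. p \<notin> vertices T \<longrightarrow> c p = 0)"

text \<open>t_A(n): number of pairs (plane tree with n vertices, A-coloring of it);
  colorings are taken extensional (value 0 off the vertex set).\<close>
definition tA :: "(nat \<Rightarrow> nat \<Rightarrow> nat) \<Rightarrow> nat \<Rightarrow> nat \<Rightarrow> nat" where
  "tA A m n = card {(T, c). tsize T = n \<and> is_coloring A m T c}"

definition FA :: "(nat \<Rightarrow> nat \<Rightarrow> nat) \<Rightarrow> nat \<Rightarrow> rat fps" where
  "FA A m = Abs_fps (\<lambda>n. of_nat (tA A m n))"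

text \<open>Block matrix [[A, 0], [1, 0]] of size (m + m') x (m + m').\<close>
definition block_ext :: "(nat \<Rightarrow> nat \<Rightarrow> nat) \<Rightarrow> nat \<Rightarrow> nat \<Rightarrow> nat \<Rightarrow> nat" where
  "block_ext A m i j = (if i < m \<and> j < m then A i j else if m \<le> i \<and> j < m then 1 else 0)"

end

theory Submission
  imports Defs
begin
unbundle fps_syntax

lemma nil_vertices[simp]: "[] \<in> vertices t"
  by (cases t) simp

lemma cons_vertices[simp]: "i#q \<in> vertices (Node ts) \<longleftrightarrow> i < length ts \<and> q \<in> vertices (ts!i)"
  by auto

declare vertices.simps[simp del]

lemma col_Node:
  "is_coloring A m (Node ts) c \<longleftrightarrow> c [] < m \<and>
     (\<forall>i<length ts. A (c []) (c [i]) = 1 \<and> is_coloring A m (ts!i) (\<lambda>p. c (i#p))) \<and>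
     (\<forall>i q. length ts \<le> i \<longrightarrow> c (i#q) = 0)"
proof
  assume H: "is_coloring A m (Node ts) c"
  then show "c [] < m \<and>
     (\<forall>i<length ts. A (c []) (c [i]) = 1 \<and> is_coloring A m (ts!i) (\<lambda>p. c (i#p))) \<and>
     (\<forall>i q. length ts \<le> i \<longrightarrow> c (i#q) = 0)"
    unfolding is_coloring_def
    apply (intro conjI)
      apply simp
     apply (intro allI impI conjI)
        apply (metis append_Nil cons_vertices nil_vertices)
       apply (metis cons_vertices)
      apply (metis append_Cons cons_vertices)
     apply (metis cons_vertices)
    apply (metis cons_vertices not_le)
    done
next
  assume H: "c [] < m \<and>
     (\<forall>i<length ts. A (c []) (c [i]) = 1 \<and> is_coloring A m (ts!i) (\<lambda>p. c (i#p))) \<and>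
     (\<forall>i q. length ts \<le> i \<longrightarrow> c (i#q) = 0)"
  show "is_coloring A m (Node ts) c"
    unfolding is_coloring_def
  proof (intro conjI allI impI ballI)
    fix p assume "p \<in> vertices (Node ts)"
    then show "c p < m" using H unfolding is_coloring_def by (cases p) auto
  next
    fix p i assume a: "p \<in> vertices (Node ts)" "p @ [i] \<in> vertices (Node ts)"
    show "A (c p) (c (p @ [i])) = 1"
    proof (cases p)
      case Nil then show ?thesis using H a by auto
    next
      case (Cons j q) then show ?thesis using H a unfolding is_coloring_def by auto
    qed
  next
    fix p assume a: "p \<notin> vertices (Node ts)"
    show "c p = 0"
    proof (cases p)
      case Nil then show ?thesis using a by auto
    next
      case (Cons j q) then show ?thesis using H a unfolding is_coloring_def
        by (cases "j < length ts") auto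
    qed
  qed
qed

definition split1 :: "(nat list \<Rightarrow> nat) \<Rightarrow> nat list \<Rightarrow> nat" where
  "split1 c = (\<lambda>p. c (0#p))"
definition split2 :: "(nat list \<Rightarrow> nat) \<Rightarrow> nat list \<Rightarrow> nat" where
  "split2 c = (\<lambda>p. case p of [] \<Rightarrow> c [] | i#q \<Rightarrow> c (Suc i # q))"
definition joinc :: "(nat list \<Rightarrow> nat) \<Rightarrow> (nat list \<Rightarrow> nat) \<Rightarrow> nat list \<Rightarrow> nat" where
  "joinc c1 c2 = (\<lambda>p. case p of [] \<Rightarrow> c2 [] | i#q \<Rightarrow> (case i of 0 \<Rightarrow> c1 q | Suc j \<Rightarrow> c2 (j#q)))"
fun kids :: "ptree \<Rightarrow> ptree list" where "kids (Node ts) = ts"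
definition joinT :: "ptree \<times> (nat list \<Rightarrow> nat) \<Rightarrow> ptree \<times> (nat list \<Rightarrow> nat) \<Rightarrow> ptree \<times> (nat list \<Rightarrow> nat)" where
  "joinT x y = (Node (fst x # kids (fst y)), joinc (snd x) (snd y))"

lemma split1_join[simp]: "split1 (joinc c1 c2) = c1"
  by (auto simp: split1_def joinc_def)
lemma split2_join[simp]: "split2 (joinc c1 c2) = c2"
  by (rule ext) (auto simp: split2_def joinc_def split: list.splits)
lemma join_split: "joinc (split1 c) (split2 c) = c"
  by (rule ext) (auto simp: split1_def split2_def joinc_def split: list.splits nat.splits)

lemma joinT_eq: "joinT x y = joinT x' y' \<Longrightarrow> x = x' \<and> y = y'"
proof -
  assume "joinT x y = joinT x' y'"
  then have a: "fst x = fst x'" "kids (fst y) = kids (fst y')" "joinc (snd x) (snd y) = joinc (snd x') (snd y')"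
    by (auto simp: joinT_def)
  from a(3) have "snd x = snd x'" "snd y = snd y'" by (metis split1_join, metis split2_join)
  moreover have "fst y = fst y'" using a(2) by (cases "fst y"; cases "fst y'") auto
  ultimately show ?thesis using a by (simp add: prod_eq_iff)
qed

lemma inj_joinT: "inj_on (\<lambda>(x,y). joinT x y) S"
  by (rule inj_onI) (auto dest: joinT_eq)

lemma tsize_pos: "tsize t \<ge> 1"
  by (cases t) auto

lemma tsize_ne0[simp]: "tsize t \<noteq> 0"
  by (cases t) auto

lemma col_Cons:
  "is_coloring A m (Node (t#ts)) c \<longleftrightarrow>
     is_coloring A m t (split1 c) \<and> is_coloring A m (Node ts) (split2 c) \<and> A (c []) (c [0]) = 1"
proof -
  have e1: "(\<forall>i<Suc n. P i) \<longleftrightarrow> P 0 \<and> (\<forall>i<n. P (Suc i))" for n and P :: "nat \<Rightarrow> bool"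
    by (auto simp: less_Suc_eq_0_disj)
  have e2: "(\<forall>i q. Suc n \<le> i \<longrightarrow> Q i q) \<longleftrightarrow> (\<forall>i q. n \<le> i \<longrightarrow> Q (Suc i) q)" for n and Q :: "nat \<Rightarrow> nat list \<Rightarrow> bool"
    by (metis Suc_le_D Suc_le_mono)
  show ?thesis
    unfolding col_Node[of A m "t#ts"] col_Node[of A m ts "split2 c"]
    by (simp only: length_Cons e1 e2 nth_Cons_0 nth_Cons_Suc) (auto simp: split1_def split2_def)
qed

lemma col_Nil:
  "is_coloring A m (Node []) c \<longleftrightarrow> c [] < m \<and> c = (\<lambda>p. if p = [] then c [] else 0)"
  unfolding col_Node by (auto simp: fun_eq_iff neq_Nil_conv)

definition CS :: "(nat \<Rightarrow> nat \<Rightarrow> nat) \<Rightarrow> nat \<Rightarrow> nat \<Rightarrow> (ptree \<times> (nat list \<Rightarrow> nat)) set" where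
  "CS A m n = {(T, c). tsize T = n \<and> is_coloring A m T c}"

lemma CS_sub: "CS A m n \<subseteq> (\<lambda>r. (Node [], \<lambda>p. if p = [] then r else 0)) ` {..<m} \<union>
   (\<lambda>(x,y). joinT x y) ` (\<Union>k\<in>{1..<n}. CS A m k \<times> CS A m (n - k))"
proof clarify
  fix T c assume a: "(T, c) \<in> CS A m n" and
    b: "(T, c) \<notin> (\<lambda>(x,y). joinT x y) ` (\<Union>k\<in>{1..<n}. CS A m k \<times> CS A m (n - k))"
  obtain ts where T: "T = Node ts" by (cases T)
  show "(T, c) \<in> (\<lambda>r. (Node [], \<lambda>p. if p = [] then r else 0)) ` {..<m}"
  proof (cases ts)
    case Nil then show ?thesis using a T by (auto simp: CS_def col_Nil)
  next
    case (Cons t ts')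
    have s: "tsize (Node (t#ts')) = tsize t + tsize (Node ts')" by simp
    have "(T, c) = joinT (t, split1 c) (Node ts', split2 c)"
      by (simp add: joinT_def T Cons join_split)
    moreover have "(t, split1 c) \<in> CS A m (tsize t)" "(Node ts', split2 c) \<in> CS A m (n - tsize t)"
      using a T Cons by (auto simp: CS_def col_Cons)
    moreover have "tsize t \<in> {1..<n}" using a T Cons tsize_pos[of "Node ts'"] tsize_pos[of t]
      by (auto simp: CS_def)
    ultimately have False using b by force
    then show ?thesis ..
  qed
qed

lemma finite_CS: "finite (CS A m n)"
proof (induction n rule: less_induct)
  case (less n)
  show ?case
    by (rule finite_subset[OF CS_sub]) (auto intro!: finite_cartesian_product less finite_imageI)
qed


lemma col_root: "is_coloring A m T c \<Longrightarrow> c [] < m"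
  by (cases T) (simp add: col_Node)

lemma B_restrict:
  assumes "m \<le> M"
  shows "is_coloring (block_ext A m) M t c \<and> c [] < m \<longleftrightarrow> is_coloring A m t c"
  using assms
proof (induction t arbitrary: c)
  case (Node ts)
  have IH: "\<And>i c. i < length ts \<Longrightarrow>
     is_coloring (block_ext A m) M (ts!i) c \<and> c [] < m \<longleftrightarrow> is_coloring A m (ts!i) c"
    using Node by (meson nth_mem)
  show ?case
  proof
    assume a: "is_coloring (block_ext A m) M (Node ts) c \<and> c [] < m"
    show "is_coloring A m (Node ts) c"
      unfolding col_Node
    proof (intro conjI allI impI)
      fix i assume i: "i < length ts"
      have b: "block_ext A m (c []) (c [i]) = 1" "is_coloring (block_ext A m) M (ts!i) (\<lambda>p. c (i#p))"
        using a i unfolding col_Node by auto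
      then have "c [i] < m" "A (c []) (c [i]) = 1" using a by (auto simp: block_ext_def split: if_splits)
      then show "A (c []) (c [i]) = 1" "is_coloring A m (ts!i) (\<lambda>p. c (i#p))"
        using IH[OF i, of "\<lambda>p. c (i#p)"] b by auto
    qed (use a in \<open>auto simp: col_Node\<close>)
  next
    assume a: "is_coloring A m (Node ts) c"
    have r: "c [] < m" using a by (simp add: col_Node)
    have "is_coloring (block_ext A m) M (Node ts) c"
      unfolding col_Node
    proof (intro conjI allI impI)
      fix i assume i: "i < length ts"
      have b: "A (c []) (c [i]) = 1" "is_coloring A m (ts!i) (\<lambda>p. c (i#p))"
        using a i unfolding col_Node by auto
      have "c [i] < m" using col_root[OF b(2)] by simp
      then show "block_ext A m (c []) (c [i]) = 1" using b r by (simp add: block_ext_def)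
      show "is_coloring (block_ext A m) M (ts!i) (\<lambda>p. c (i#p))"
        using IH[OF i, of "\<lambda>p. c (i#p)"] b by auto
    qed (use a r Node.prems in \<open>auto simp: col_Node\<close>)
    then show "is_coloring (block_ext A m) M (Node ts) c \<and> c [] < m" using r by simp
  qed
qed

definition HS :: "(nat \<Rightarrow> nat \<Rightarrow> nat) \<Rightarrow> nat \<Rightarrow> nat \<Rightarrow> nat \<Rightarrow> nat \<Rightarrow> (ptree \<times> (nat list \<Rightarrow> nat)) set" where
  "HS A m M r n = {(T, c). tsize T = n \<and> is_coloring (block_ext A m) M T c \<and> c [] = r}"

lemma HS_eq:
  assumes "m \<le> r" "r < M"
  shows "HS A m M r n = (if n = 1 then {(Node [], \<lambda>p. if p = [] then r else 0)} else {}) \<union>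
     (\<lambda>(x,y). joinT x y) ` (\<Union>k\<in>{..n}. CS A m k \<times> HS A m M r (n - k))"
    (is "?L = ?R")
proof
  show "?L \<subseteq> ?R"
  proof clarify
    fix T c assume a: "(T, c) \<in> HS A m M r n" and
      b: "(T, c) \<notin> (\<lambda>(x,y). joinT x y) ` (\<Union>k\<in>{..n}. CS A m k \<times> HS A m M r (n - k))"
    obtain ts where T: "T = Node ts" by (cases T)
    show "(T, c) \<in> (if n = 1 then {(Node [], \<lambda>p. if p = [] then r else 0)} else {})"
    proof (cases ts)
      case Nil then show ?thesis using a T by (auto simp: HS_def col_Nil)
    next
      case (Cons t ts')
      have "(T, c) = joinT (t, split1 c) (Node ts', split2 c)"
        by (simp add: joinT_def T Cons join_split)
      moreover have c: "is_coloring (block_ext A m) M t (split1 c)"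
        "is_coloring (block_ext A m) M (Node ts') (split2 c)"
        "block_ext A m r (c [0]) = 1" "c [] = r" "tsize t + tsize (Node ts') = n"
        using a T Cons by (auto simp: HS_def col_Cons)
      moreover have "split1 c [] < m" using c(3) assms by (auto simp: split1_def block_ext_def split: if_splits)
      ultimately have "(t, split1 c) \<in> CS A m (tsize t)" "(Node ts', split2 c) \<in> HS A m M r (n - tsize t)"
        using B_restrict[of m M A t "split1 c"] assms by (auto simp: CS_def HS_def split2_def)
      moreover have "tsize t \<le> n" using c by auto
      ultimately have False using b \<open>(T, c) = _\<close> by force
      then show ?thesis ..
    qed
  qed
next
  show "?R \<subseteq> ?L"
  proof
    fix x assume "x \<in> ?R"
    then consider "n = 1" "x = (Node [], \<lambda>p. if p = [] then r else 0)"
      | k t c1 T2 c2 where "k \<le> n" "(t, c1) \<in> CS A m k" "(T2, c2) \<in> HS A m M r (n - k)"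
          "x = joinT (t, c1) (T2, c2)"
      by (auto split: if_splits)
    then show "x \<in> ?L"
    proof cases
      case 1 then show ?thesis using assms by (simp add: HS_def col_Nil)
    next
      case 2
      obtain ts where T2: "T2 = Node ts" by (cases T2)
      have c1: "is_coloring A m t c1" "tsize t = k" using 2 by (auto simp: CS_def)
      have c2: "is_coloring (block_ext A m) M (Node ts) c2" "c2 [] = r" "tsize T2 = n - k"
        using 2 T2 by (auto simp: HS_def)
      have r1: "c1 [] < m" using col_root[OF c1(1)] .
      have k: "k < n" using c2(3) c1(2) tsize_pos[of t] tsize_pos[of T2] \<open>k \<le> n\<close> by linarith
      have "is_coloring (block_ext A m) M (Node (t # ts)) (joinc c1 c2)"
      proof -
        have j0: "joinc c1 c2 [] = c2 []" "joinc c1 c2 [0] = c1 []" by (simp_all add: joinc_def)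
        show ?thesis
          unfolding col_Cons split1_join split2_join j0 using B_restrict[of m M A t c1] c1 c2 r1 assms
          by (auto simp: block_ext_def)
      qed
      moreover have "joinc c1 c2 [] = r" using c2 by (simp add: joinc_def)
      moreover have "tsize (Node (t # ts)) = n" using c1 c2 T2 k by simp
      ultimately show ?thesis using 2 T2 by (simp add: HS_def joinT_def)
    qed
  qed
qed


lemma finite_HS: "finite (HS A m M r n)"
  by (rule finite_subset[OF _ finite_CS[of "block_ext A m" M n]]) (auto simp: HS_def CS_def)

lemma card_HS:
  assumes "m \<le> r" "r < M"
  shows "card (HS A m M r n) = (if n = 1 then 1 else 0) +
           (\<Sum>k\<le>n. card (CS A m k) * card (HS A m M r (n - k)))"
proof -
  let ?U = "\<Union>k\<in>{..n}. CS A m k \<times> HS A m M r (n - k)"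
  have fin: "finite ?U" by (auto intro!: finite_cartesian_product finite_CS finite_HS)
  have disj: "(if n = 1 then {(Node [], \<lambda>p. if p = [] then r else 0)} else {}) \<inter>
      (\<lambda>(x,y). joinT x y) ` ?U = {}"
    by (auto simp: joinT_def)
  have cU: "card ?U = (\<Sum>k\<le>n. card (CS A m k) * card (HS A m M r (n - k)))"
    apply (subst card_UN_disjoint)
    apply simp
    apply (auto intro!: finite_cartesian_product finite_CS finite_HS)[1]
    apply (fastforce simp: CS_def)
    apply (simp add: card_cartesian_product)
    done
  show ?thesis
    apply (subst HS_eq[OF assms])
    apply (subst card_Un_disjoint)
    using fin disj apply auto[3]
    apply (subst card_image[OF inj_joinT])
    using cU by simp
qed

lemma tA_CS: "tA A m n = card (CS A m n)"
  by (simp add: tA_def CS_def)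

lemma FA_0: "FA A m $ 0 = 0"
proof -
  have "CS A m 0 = {}" by (auto simp: CS_def)
  then show ?thesis by (simp add: FA_def tA_CS)
qed

lemma HS_fps:
  assumes "m \<le> r" "r < M"
  shows "Abs_fps (\<lambda>n. of_nat (card (HS A m M r n)) :: rat) = fps_X / (1 - FA A m)"
proof -
  define h where "h = Abs_fps (\<lambda>n. of_nat (card (HS A m M r n)) :: rat)"
  define f where "f = FA A m"
  have "h = fps_X + f * h"
  proof (rule fps_ext)
    fix n
    show "h $ n = (fps_X + f * h) $ n"
      unfolding h_def f_def
      by (subst card_HS[OF assms]) (simp add: FA_def tA_CS fps_X_def fps_mult_nth atLeast0AtMost)
  qed
  then have "h * (1 - f) = fps_X" by (simp add: algebra_simps)
  moreover have u: "(1 - f) $ 0 \<noteq> 0" by (simp add: f_def FA_0)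
  ultimately have "h = fps_X * inverse (1 - f)"
    by (metis inverse_mult_eq_1' mult.assoc mult.right_neutral)
  then show ?thesis using u by (simp add: h_def f_def fps_divide_unit)
qed

theorem theorem25:
  fixes A :: "nat \<Rightarrow> nat \<Rightarrow> nat" and m m' :: nat
  assumes "m \<ge> 1"
    and "\<forall>i<m. \<forall>j<m. A i j \<in> {0, 1}"
    and "m' \<ge> 1"
  shows "FA (block_ext A m) (m + m') =
         FA A m + fps_const (of_nat m') * fps_X / (1 - FA A m)"
proof (rule fps_ext)
  fix n
  let ?M = "m + m'"
  have split: "CS (block_ext A m) ?M n = CS A m n \<union> (\<Union>r\<in>{m..<?M}. HS A m ?M r n)"
  proof
    show "CS (block_ext A m) ?M n \<subseteq> CS A m n \<union> (\<Union>r\<in>{m..<?M}. HS A m ?M r n)"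
    proof (rule subsetI)
      fix x assume x: "x \<in> CS (block_ext A m) ?M n"
      obtain T c where Tc: "x = (T, c)" by (cases x)
      show "x \<in> CS A m n \<union> (\<Union>r\<in>{m..<?M}. HS A m ?M r n)"
      proof (cases "x \<in> CS A m n")
        case True then show ?thesis by simp
      next
        case False
      then have a: "(T, c) \<in> CS (block_ext A m) ?M n" "(T, c) \<notin> CS A m n" using x Tc by auto
      then have "c [] < ?M" "\<not> c [] < m"
        using col_root B_restrict[of m ?M A T c] by (auto simp: CS_def)
      then show ?thesis using a Tc by (auto simp: HS_def CS_def)
    qed
    qed
  next
    show "CS A m n \<union> (\<Union>r\<in>{m..<?M}. HS A m ?M r n) \<subseteq> CS (block_ext A m) ?M n"
      using B_restrict[of m ?M A] by (auto simp: HS_def CS_def)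
  qed
  have c: "card (CS (block_ext A m) ?M n) = card (CS A m n) + (\<Sum>r\<in>{m..<?M}. card (HS A m ?M r n))"
    unfolding split
    apply (subst card_Un_disjoint)
    apply (simp add: finite_CS)
    apply (simp add: finite_HS)
    using col_root apply (fastforce simp: CS_def HS_def)
    apply (subst card_UN_disjoint)
    apply (simp_all add: finite_HS)
    apply (auto simp: HS_def)
    done
  have hs: "of_nat (card (HS A m ?M r n)) = (fps_X / (1 - FA A m)) $ n" if "r \<in> {m..<?M}" for r
    using HS_fps[of m r ?M A] that by (metis atLeastLessThan_iff fps_nth_Abs_fps)
  have "fps_const (of_nat m') * fps_X / (1 - FA A m) = fps_const (of_nat m') * (fps_X / (1 - FA A m))"
    by (simp add: fps_divide_unit FA_0 mult.assoc)
  then show "FA (block_ext A m) ?M $ n = (FA A m + fps_const (of_nat m') * fps_X / (1 - FA A m)) $ n"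
    by (simp add: FA_def tA_CS c hs)
qed

end
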